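(* Consider the path graph on $n$ nodes with Laplacian $L_n$ and a set of control (observation) nodes $I_o=\{i_1<i_2<\dots<i_m\}\subset\{1,\dots,n\}$. The path is reachable (observable) from $I_o$ if and only if the matrices $N_{i_1-1}, M_{i_2-i_1-1},\dots,M_{i_m-i_{m-1}-1}, N_{n-i_m}$ do not have a common eigenvalue (an eigenvalue shared by all of them). The eigenvalues common to all these matrices are exactly the unreachable (unobservable) eigenvalues of $L_n$ from $I_o$.
   Context: The path graph on nodes $\{1,\dots,n\}$ has edges $\{i,i+1\}$; $L_n$ is tridiagonal with diagonal $(1,2,\dots,2,1)$ and off-diagonal $-1$. With $B=[e_{i_1}|\cdots|e_{i_m}]$, reachable from $I_o$ means $(L_n,B)$ is reachable, observable means $(L_n,B^T)$ is observable. An unreachable (unobservable) eigenvalue is $\lambda$ such that some $v\ne0$ satisfies $L_nv=\lambda v$ and $(v)_j=0$ for all $j\in I_o$. $N_\nu$ ($\nu\times\nu$) is tridiagonal with diagonal $(1,2,\dots,2)$ and off-diagonal $-1$; $M_\mu$ ($\mu\times\mu$) is tridiagonal with diagonal all $2$ and off-diagonal $-1$. A matrix of size $0\times0$ is regarded as having no eigenvalues. *)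

theory Defs
  imports "Jordan_Normal_Form.DL_Rank" "Jordan_Normal_Form.Char_Poly"
begin

(* All matrices are 0-indexed (Jordan_Normal_Form); node j in {1..n} of the paper
   corresponds to row/column index j - 1. *)

definition path_laplacian :: "nat \<Rightarrow> real mat" where
  "path_laplacian n = mat n n (\<lambda>(i,j).
     if i = j then (if 0 < i then 1 else 0) + (if i + 1 < n then 1 else 0)
     else if i + 1 = j \<or> j + 1 = i then -1 else 0)"

definition N_mat :: "nat \<Rightarrow> real mat" where
  "N_mat \<nu> = mat \<nu> \<nu> (\<lambda>(i,j).
     if i = j then (if i = 0 then 1 else 2)
     else if i + 1 = j \<or> j + 1 = i then -1 else 0)"

definition M_mat :: "nat \<Rightarrow> real mat" where
  "M_mat \<mu> = mat \<mu> \<mu> (\<lambda>(i,j).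
     if i = j then 2
     else if i + 1 = j \<or> j + 1 = i then -1 else 0)"

definition input_mat :: "nat \<Rightarrow> nat list \<Rightarrow> real mat" where
  "input_mat n is = mat n (length is) (\<lambda>(i,k). if i = is ! k - 1 then 1 else 0)"

(* Kalman controllability matrix [B, AB, ..., A^(n-1) B] *)
definition ctrb_mat :: "real mat \<Rightarrow> real mat \<Rightarrow> real mat" where
  "ctrb_mat A B = mat (dim_row A) (dim_row A * dim_col B)
     (\<lambda>(i,j). (A ^\<^sub>m (j div dim_col B) * B) $$ (i, j mod dim_col B))"

(* Kalman observability matrix [C; CA; ...; C A^(n-1)] *)
definition obsv_mat :: "real mat \<Rightarrow> real mat \<Rightarrow> real mat" where
  "obsv_mat A C = mat (dim_row C * dim_col A) (dim_col A)
     (\<lambda>(i,j). (C * A ^\<^sub>m (i div dim_row C)) $$ (i mod dim_row C, j))"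

definition reachable :: "real mat \<Rightarrow> real mat \<Rightarrow> bool" where
  "reachable A B \<longleftrightarrow> vec_space.rank (dim_row A) (ctrb_mat A B) = dim_row A"

definition observable :: "real mat \<Rightarrow> real mat \<Rightarrow> bool" where
  "observable A C \<longleftrightarrow>
     vec_space.rank (dim_row (obsv_mat A C)) (obsv_mat A C) = dim_col A"

definition unreachable_eigenvalue :: "nat \<Rightarrow> nat set \<Rightarrow> real \<Rightarrow> bool" where
  "unreachable_eigenvalue n Io x \<longleftrightarrow>
     (\<exists>v. eigenvector (path_laplacian n) v x \<and> (\<forall>j\<in>Io. v $ (j - 1) = 0))"

definition common_eigenvalue :: "nat \<Rightarrow> nat list \<Rightarrow> real \<Rightarrow> bool" where
  "common_eigenvalue n is x \<longleftrightarrow>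
     eigenvalue (N_mat (hd is - 1)) x \<and>
     (\<forall>k. k + 1 < length is \<longrightarrow> eigenvalue (M_mat (is ! (k+1) - is ! k - 1)) x) \<and>
     eigenvalue (N_mat (n - last is)) x"

end

theory Submission
  imports Defs
begin

fun sa :: "nat \<Rightarrow> real \<Rightarrow> real" where
  "sa 0 x = 0" | "sa (Suc 0) x = 1"
| "sa (Suc (Suc j)) x = (2 - x) * sa (Suc j) x - sa j x"

fun sb :: "nat \<Rightarrow> real \<Rightarrow> real" where
  "sb 0 x = 1" | "sb (Suc 0) x = 1 - x"
| "sb (Suc (Suc j)) x = (2 - x) * sb (Suc j) x - sb j x"

lemma sb_sa: "sb j x = sa (Suc j) x - sa j x"
proof (induction j rule: less_induct)
  case (less j)
  show ?case
  proof (cases j)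
    case (Suc k)
    show ?thesis
    proof (cases k)
      case (Suc l)
      have "sb j x = (2 - x) * sb (Suc l) x - sb l x" using \<open>j = Suc k\<close> Suc by simp
      also have "\<dots> = (2 - x) * (sa (Suc (Suc l)) x - sa (Suc l) x) - (sa (Suc l) x - sa l x)"
        using less[of l] less[of "Suc l"] \<open>j = Suc k\<close> Suc by simp
      also have "\<dots> = sa (Suc j) x - sa j x" using \<open>j = Suc k\<close> Suc by (simp add: algebra_simps)
      finally show ?thesis .
    qed (use \<open>j = Suc k\<close> in simp)
  qed simp
qed

lemma rec_unique:
  fixes j :: nat
  assumes "\<And>j. j + 2 \<le> N \<Longrightarrow> c (j+2) = (2 - x) * c (j+1) - c j"
    and "\<And>j. j + 2 \<le> N \<Longrightarrow> d (j+2) = (2 - x) * d (j+1) - d j"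
    and "c 0 = d 0" "c 1 = d 1"
  shows "j \<le> N \<Longrightarrow> c j = d j"
proof (induction j rule: less_induct)
  case (less j)
  show ?case
  proof (cases j)
    case 0 then show ?thesis using assms by simp
  next
    case (Suc k) note k = this
    show ?thesis
    proof (cases k)
      case 0 then show ?thesis using assms k by simp
    next
      case (Suc l)
      then have "c j = (2 - x) * c (l+1) - c l" "d j = (2 - x) * d (l+1) - d l"
        using assms(1,2)[of l] less.prems k by (auto simp: numeral_2_eq_2)
      moreover have "c (l+1) = d (l+1)" "c l = d l" using less k Suc by auto
      ultimately show ?thesis by simp
    qed
  qed
qed

lemma sa_rec: "sa (j+2) x = (2 - x) * sa (j+1) x - sa j x"
  by (simp add: numeral_2_eq_2)
lemma sb_rec: "sb (j+2) x = (2 - x) * sb (j+1) x - sb j x"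
  by (simp add: numeral_2_eq_2)

lemma sol_sa:
  assumes "\<And>j. j + 2 \<le> N \<Longrightarrow> c (j+2) = (2 - x) * c (j+1) - c j" "c 0 = 0" "j \<le> N"
  shows "c j = c 1 * sa j x"
proof -
  have rr: "\<And>j. j + 2 \<le> N \<Longrightarrow> c 1 * sa (j+2) x = (2 - x) * (c 1 * sa (j+1) x) - c 1 * sa j x"
    unfolding sa_rec by (simp add: algebra_simps)
  show ?thesis
    by (rule rec_unique[of N c x "\<lambda>j. c 1 * sa j x", OF assms(1) rr]) (use assms(2,3) in simp_all)
qed

lemma sol_sb:
  assumes "\<And>j. j + 2 \<le> N \<Longrightarrow> c (j+2) = (2 - x) * c (j+1) - c j" "c 1 = (1 - x) * c 0" "j \<le> N"
  shows "c j = c 0 * sb j x"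
proof -
  have rr: "\<And>j. j + 2 \<le> N \<Longrightarrow> c 0 * sb (j+2) x = (2 - x) * (c 0 * sb (j+1) x) - c 0 * sb j x"
    unfolding sb_rec by (simp add: algebra_simps)
  show ?thesis
    by (rule rec_unique[of N c x "\<lambda>j. c 0 * sb j x", OF assms(1) rr]) (use assms(2,3) in \<open>simp_all add: algebra_simps\<close>)
qed

lemma sb_shift:
  assumes "sb p x = 0"
  shows "sb (p + j) x = - sb (p - 1) x * sa j x"
proof -
  have p: "p \<ge> 1" using assms by (cases p) auto
  have "sb (p+1) x = - sb (p - 1) x"
    using sb_rec[of "p-1" x] p assms by simp
  moreover have "\<And>j. j + 2 \<le> p + j \<Longrightarrow> sb (p + (j+2)) x = (2 - x) * sb (p+(j+1)) x - sb (p+j) x"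
    using sb_rec[of "p + _" x] by (simp add: add.assoc)
  ultimately show ?thesis
    using sol_sa[of "p+j" "\<lambda>j. sb (p+j) x" x j] assms by simp
qed

lemma sb_no_two_zeros: "sb j x = 0 \<Longrightarrow> sb (Suc j) x = 0 \<Longrightarrow> False"
proof (induction j)
  case 0 then show ?case by simp
next
  case (Suc j)
  have "sb (Suc (Suc j)) x = (2 - x) * sb (Suc j) x - sb j x" by simp
  then show ?case using Suc by simp
qed

lemma sb_prev_nz: "sb p x = 0 \<Longrightarrow> sb (p - 1) x \<noteq> 0"
  using sb_no_two_zeros[of "p-1" x] by (cases p) auto

lemma sa_1: "sa 1 x = 1" by simp


definition tri :: "nat \<Rightarrow> (nat \<Rightarrow> real) \<Rightarrow> real mat" where
  "tri N d = mat N N (\<lambda>(i,j). if i = j then d i else if i + 1 = j \<or> j + 1 = i then -1 else 0)"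

lemma tri_carrier[simp]: "tri N d \<in> carrier_mat N N" by (simp add: tri_def)
lemma tri_dim[simp]: "dim_row (tri N d) = N" "dim_col (tri N d) = N" by (auto simp add: tri_def)

lemma tri_mult:
  assumes v: "v \<in> carrier_vec N" and i: "i < N"
  shows "(tri N d *\<^sub>v v) $ i = d i * v $ i - (if 0 < i then v $ (i - 1) else 0)
           - (if i + 1 < N then v $ (i + 1) else 0)"
proof -
  have "(tri N d *\<^sub>v v) $ i = (\<Sum>j\<in>{0..<N}. tri N d $$ (i,j) * v $ j)"
    using v i by (simp add: scalar_prod_def row_def)
  also have "\<dots> = (\<Sum>j\<in>{0..<N}. (if j = i then d i * v $ i else 0)
        + (if j = i - 1 \<and> 0 < i then - v $ (i - 1) else 0)
        + (if j = i + 1 then - v $ (i + 1) else 0))"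
    by (rule sum.cong) (use i in \<open>auto simp: tri_def\<close>)
  also have "\<dots> = d i * v $ i - (if 0 < i then v $ (i - 1) else 0)
           - (if i + 1 < N then v $ (i + 1) else 0)"
    unfolding sum.distrib using i by (auto simp: sum.delta' split: if_splits)
  finally show ?thesis .
qed

lemma L_tri: "path_laplacian n = tri n (\<lambda>i. (if 0 < i then 1 else 0) + (if i + 1 < n then 1 else 0))"
  unfolding path_laplacian_def tri_def by (rule eq_matI) auto
lemma N_tri: "N_mat \<nu> = tri \<nu> (\<lambda>i. if i = 0 then 1 else 2)"
  unfolding N_mat_def tri_def by (rule eq_matI) auto
lemma M_tri: "M_mat \<mu> = tri \<mu> (\<lambda>i. 2)"
  unfolding M_mat_def tri_def by (rule eq_matI) auto

lemma eigvec_tri: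
  "eigenvector (tri N d) w x \<longleftrightarrow> w \<in> carrier_vec N \<and> w \<noteq> 0\<^sub>v N \<and>
     (\<forall>i<N. d i * w $ i - (if 0 < i then w $ (i - 1) else 0)
           - (if i + 1 < N then w $ (i + 1) else 0) = x * w $ i)"
proof -
  have "w \<in> carrier_vec N \<Longrightarrow> tri N d *\<^sub>v w = x \<cdot>\<^sub>v w \<longleftrightarrow> (\<forall>i<N. (tri N d *\<^sub>v w) $ i = x * w $ i)"
    by (auto simp: vec_eq_iff)
  moreover have "w \<in> carrier_vec N \<Longrightarrow> (\<forall>i<N. (tri N d *\<^sub>v w) $ i = x * w $ i) \<longleftrightarrow> (\<forall>i<N. d i * w $ i - (if 0 < i then w $ (i - 1) else 0)
           - (if i + 1 < N then w $ (i + 1) else 0) = x * w $ i)"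
    using tri_mult[of w N _ d] by simp
  ultimately show ?thesis unfolding eigenvector_def tri_dim by blast
qed

lemma vec_nz: "w \<in> carrier_vec N \<Longrightarrow> w \<noteq> 0\<^sub>v N \<longleftrightarrow> (\<exists>i<N. w $ i \<noteq> 0)"
  by (auto simp: vec_eq_iff)

lemma eig_M: "eigenvalue (M_mat \<mu>) x \<longleftrightarrow> sa (Suc \<mu>) x = 0"
proof
  assume "eigenvalue (M_mat \<mu>) x"
  then obtain w where w: "eigenvector (tri \<mu> (\<lambda>i. 2)) w x"
    unfolding eigenvalue_def M_tri by blast
  then have wc: "w \<in> carrier_vec \<mu>" and wnz: "\<exists>i<\<mu>. w $ i \<noteq> 0"
    and eq: "\<And>i. i < \<mu> \<Longrightarrow> 2 * w $ i - (if 0 < i then w $ (i - 1) else 0)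
           - (if i + 1 < \<mu> then w $ (i + 1) else 0) = x * w $ i"
    unfolding eigvec_tri by (auto simp: vec_nz)
  define c where "c j = (if j = 0 then 0 else if j \<le> \<mu> then w $ (j - 1) else 0)" for j
  have rec: "c (j+2) = (2 - x) * c (j+1) - c j" if "j + 2 \<le> \<mu> + 1" for j
    using eq[of j] that by (auto simp: c_def algebra_simps)
  have sol: "c j = c 1 * sa j x" if "j \<le> \<mu> + 1" for j
    by (rule sol_sa[of "\<mu>+1" c x j]) (use rec that in \<open>auto simp: c_def\<close>)
  obtain i where i: "i < \<mu>" "w $ i \<noteq> 0" using wnz by blast
  have "c 1 \<noteq> 0"
  proof
    assume "c 1 = 0"
    then have "c (Suc i) = 0" using sol[of "Suc i"] i by simp
    then show False using i by (simp add: c_def)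
  qed
  moreover have "c (\<mu> + 1) = 0" by (simp add: c_def)
  ultimately show "sa (Suc \<mu>) x = 0" using sol[of "\<mu>+1"] by simp
next
  assume h: "sa (Suc \<mu>) x = 0"
  then have mu: "\<mu> > 0" by (cases \<mu>) auto
  define w where "w = vec \<mu> (\<lambda>j. sa (Suc j) x)"
  have "eigenvector (tri \<mu> (\<lambda>i. 2)) w x"
    unfolding eigvec_tri
  proof (intro conjI allI impI)
    show "w \<in> carrier_vec \<mu>" by (simp add: w_def)
    show "w \<noteq> 0\<^sub>v \<mu>" using mu by (auto simp: w_def vec_eq_iff)
    fix i assume i: "i < \<mu>"
    have r: "sa (Suc (Suc i)) x = (2 - x) * sa (Suc i) x - sa i x" by simp
    have a: "(if 0 < i then w $ (i - 1) else 0) = sa i x" using i by (cases i) (auto simp: w_def)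
    have b: "(if i + 1 < \<mu> then w $ (i + 1) else 0) = sa (Suc (Suc i)) x"
    proof (cases "i + 1 < \<mu>")
      case False
      then have "\<mu> = Suc i" using i by simp
      then show ?thesis using h False by simp
    qed (simp add: w_def)
    show "2 * w $ i - (if 0 < i then w $ (i - 1) else 0) - (if i + 1 < \<mu> then w $ (i + 1) else 0) = x * w $ i"
      unfolding a b r using i by (simp add: w_def algebra_simps)
  qed
  then show "eigenvalue (M_mat \<mu>) x" unfolding eigenvalue_def M_tri by blast
qed


lemma eig_N: "eigenvalue (N_mat \<nu>) x \<longleftrightarrow> sb \<nu> x = 0"
proof
  assume "eigenvalue (N_mat \<nu>) x"
  then obtain w where w: "eigenvector (tri \<nu> (\<lambda>i. if i = 0 then 1 else 2)) w x"
    unfolding eigenvalue_def N_tri by blast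
  then have wc: "w \<in> carrier_vec \<nu>" and wnz: "\<exists>i<\<nu>. w $ i \<noteq> 0"
    and eq: "\<And>i. i < \<nu> \<Longrightarrow> (if i = 0 then 1 else 2) * w $ i - (if 0 < i then w $ (i - 1) else 0)
           - (if i + 1 < \<nu> then w $ (i + 1) else 0) = x * w $ i"
    unfolding eigvec_tri by (auto simp: vec_nz)
  obtain i where i: "i < \<nu>" "w $ i \<noteq> 0" using wnz by blast
  define c where "c j = (if j < \<nu> then w $ j else 0)" for j
  have rec: "c (j+2) = (2 - x) * c (j+1) - c j" if "j + 2 \<le> \<nu>" for j
    using eq[of "j+1"] that by (auto simp: c_def algebra_simps)
  have c1: "c 1 = (1 - x) * c 0"
    using eq[of 0] i by (auto simp: c_def algebra_simps)
  have sol: "c j = c 0 * sb j x" if "j \<le> \<nu>" for j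
    by (rule sol_sb[of "\<nu>" c x j]) (use rec c1 that in auto)
  have "c 0 \<noteq> 0"
  proof
    assume "c 0 = 0"
    then have "c i = 0" using sol[of i] i by simp
    then show False using i by (simp add: c_def)
  qed
  moreover have "c \<nu> = 0" by (simp add: c_def)
  ultimately show "sb \<nu> x = 0" using sol[of "\<nu>"] by simp
next
  assume h: "sb \<nu> x = 0"
  then have nu: "\<nu> > 0" by (cases \<nu>) auto
  define w where "w = vec \<nu> (\<lambda>j. sb j x)"
  have "eigenvector (tri \<nu> (\<lambda>i. if i = 0 then 1 else 2)) w x"
    unfolding eigvec_tri
  proof (intro conjI allI impI)
    show "w \<in> carrier_vec \<nu>" by (simp add: w_def)
    show "w \<noteq> 0\<^sub>v \<nu>" using nu by (auto simp: w_def vec_eq_iff)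
    fix i assume i: "i < \<nu>"
    have b: "(if i + 1 < \<nu> then w $ (i + 1) else 0) = sb (Suc i) x"
    proof (cases "i + 1 < \<nu>")
      case False
      then have "\<nu> = Suc i" using i by simp
      then show ?thesis using h False by simp
    qed (simp add: w_def)
    show "(if i = 0 then 1 else 2) * w $ i - (if 0 < i then w $ (i - 1) else 0) - (if i + 1 < \<nu> then w $ (i + 1) else 0) = x * w $ i"
    proof (cases i)
      case 0 then show ?thesis unfolding b using i by (simp add: w_def algebra_simps)
    next
      case (Suc k)
      have r: "sb (Suc (Suc k)) x = (2 - x) * sb (Suc k) x - sb k x" by simp
      show ?thesis unfolding b using i Suc r by (simp add: w_def algebra_simps)
    qed
  qed
  then show "eigenvalue (N_mat \<nu>) x" unfolding eigenvalue_def N_tri by blast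
qed


definition dL :: "nat \<Rightarrow> nat \<Rightarrow> real" where
  "dL n i = (if 0 < i then 1 else 0) + (if i + 1 < n then 1 else 0)"

lemma L_tri': "path_laplacian n = tri n (dL n)"
  unfolding L_tri dL_def by simp

lemma eig_L_struct:
  assumes "eigenvector (path_laplacian n) v x"
  shows "n > 0 \<and> v \<in> carrier_vec n \<and> v $ 0 \<noteq> 0 \<and> (\<forall>j<n. v $ j = v $ 0 * sb j x) \<and> sb n x = sb (n - 1) x"
proof -
  from assms have wc: "v \<in> carrier_vec n" and wnz: "\<exists>i<n. v $ i \<noteq> 0"
    and eq: "\<And>i. i < n \<Longrightarrow> dL n i * v $ i - (if 0 < i then v $ (i - 1) else 0)
           - (if i + 1 < n then v $ (i + 1) else 0) = x * v $ i"
    unfolding L_tri' eigvec_tri by (auto simp: vec_nz)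
  obtain i where i: "i < n" "v $ i \<noteq> 0" using wnz by blast
  define c where "c j = (if j < n then v $ j else v $ (n - 1))" for j
  have rec: "c (j+2) = (2 - x) * c (j+1) - c j" if "j + 2 \<le> n" for j
  proof (cases "j + 2 < n")
    case True
    have e: "dL n (j+1) * v $ (j+1) - v $ j - v $ (j+2) = x * v $ (j+1)"
      using eq[of "j+1"] True by simp
    have d: "dL n (j+1) = 2" using True by (simp add: dL_def)
    have "c (j+2) = v $ (j+2)" "c (j+1) = v $ (j+1)" "c j = v $ j" using True by (simp_all add: c_def)
    then show ?thesis using e d by (simp add: algebra_simps)
  next
    case False
    then have nj: "n = j + 2" using that by simp
    have e: "dL n (j+1) * v $ (j+1) - v $ j = x * v $ (j+1)"
      using eq[of "j+1"] nj by simp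
    have d: "dL n (j+1) = 1" using nj by (simp add: dL_def)
    have "c (j+2) = v $ (j+1)" "c (j+1) = v $ (j+1)" "c j = v $ j" using nj by (simp_all add: c_def)
    then show ?thesis using e d by (simp add: algebra_simps)
  qed
  have c1: "c 1 = (1 - x) * c 0"
  proof (cases "1 < n")
    case True
    have e: "dL n 0 * v $ 0 - v $ 1 = x * v $ 0" using eq[of 0] True by simp
    have d: "dL n 0 = 1" using True by (simp add: dL_def)
    have "c 1 = v $ 1" "c 0 = v $ 0" using True by (simp_all add: c_def)
    then show ?thesis using e d by (simp add: algebra_simps)
  next
    case False
    then have n1: "n = 1" using i by simp
    have e: "dL n 0 * v $ 0 = x * v $ 0" using eq[of 0] n1 by simp
    have d: "dL n 0 = 0" using n1 by (simp add: dL_def)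
    have "c 1 = v $ 0" "c 0 = v $ 0" using n1 by (simp_all add: c_def)
    then show ?thesis using e d by (simp add: algebra_simps)
  qed
  have sol: "c j = c 0 * sb j x" if "j \<le> n" for j
    by (rule sol_sb[of n c x j]) (use rec c1 that in auto)
  have c0: "c 0 \<noteq> 0"
  proof
    assume "c 0 = 0"
    then have "c i = 0" using sol[of i] i by simp
    then show False using i by (simp add: c_def)
  qed
  have n: "n > 0" using i by simp
  have cn: "c n = c (n - 1)" using n by (simp add: c_def)
  have "c 0 * sb n x = c 0 * sb (n - 1) x"
    using sol[of n] sol[of "n - 1"] cn by simp
  then have sbn: "sb n x = sb (n - 1) x" using c0 by simp
  have v0: "c 0 = v $ 0" using n by (simp add: c_def)
  have allj: "\<forall>j<n. v $ j = v $ 0 * sb j x"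
  proof (intro allI impI)
    fix j assume "j < n"
    then show "v $ j = v $ 0 * sb j x" using sol[of j] v0 by (simp add: c_def)
  qed
  show ?thesis using n wc sbn allj c0 unfolding v0 by blast
qed

lemma eig_L_constr:
  assumes n: "n > 0" and h: "sb n x = sb (n - 1) x"
  shows "eigenvector (path_laplacian n) (vec n (\<lambda>j. sb j x)) x"
  unfolding L_tri' eigvec_tri
proof (intro conjI allI impI)
  let ?w = "vec n (\<lambda>j. sb j x)"
  show "?w \<in> carrier_vec n" by simp
  show "?w \<noteq> 0\<^sub>v n" using n by (auto simp: vec_eq_iff)
  fix i assume i: "i < n"
  define pr where "pr = (if 0 < i then sb (i - 1) x else 1)"
  have r: "sb (Suc i) x = (2 - x) * sb i x - pr"
    by (cases i) (auto simp: pr_def)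
  have a: "(if 0 < i then 1 else 0) * ?w $ i - (if 0 < i then ?w $ (i - 1) else 0) = sb i x - pr"
    using i by (auto simp: pr_def)
  have b: "(if i + 1 < n then 1 else 0) * ?w $ i - (if i + 1 < n then ?w $ (i + 1) else 0) = sb i x - sb (Suc i) x"
  proof (cases "i + 1 < n")
    case False
    then have "n = Suc i" using i by simp
    then show ?thesis using h False by simp
  qed simp
  have "dL n i * ?w $ i - (if 0 < i then ?w $ (i - 1) else 0) - (if i + 1 < n then ?w $ (i + 1) else 0)
      = ((if 0 < i then 1 else 0) * ?w $ i - (if 0 < i then ?w $ (i - 1) else 0))
        + ((if i + 1 < n then 1 else 0) * ?w $ i - (if i + 1 < n then ?w $ (i + 1) else 0))"
    unfolding dL_def by (simp add: algebra_simps)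
  also have "\<dots> = x * ?w $ i" unfolding a b r using i by (simp add: algebra_simps)
  finally show "dL n i * ?w $ i - (if 0 < i then ?w $ (i - 1) else 0) - (if i + 1 < n then ?w $ (i + 1) else 0) = x * ?w $ i" .
qed


lemma unreach_iff:
  assumes "Io \<subseteq> {1..n}"
  shows "unreachable_eigenvalue n Io x \<longleftrightarrow> n > 0 \<and> sb n x = sb (n - 1) x \<and> (\<forall>i\<in>Io. sb (i - 1) x = 0)"
proof
  assume "unreachable_eigenvalue n Io x"
  then obtain v where v: "eigenvector (path_laplacian n) v x" "\<forall>j\<in>Io. v $ (j - 1) = 0"
    unfolding unreachable_eigenvalue_def by blast
  note s = eig_L_struct[OF v(1)]
  have "\<forall>i\<in>Io. sb (i - 1) x = 0"
  proof
    fix i assume i: "i \<in> Io"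
    then have "i \<in> {1..n}" using assms by blast
    then have "i - 1 < n" by auto
    then have "v $ (i - 1) = v $ 0 * sb (i - 1) x" using s by blast
    moreover have "v $ 0 \<noteq> 0" using s by blast
    moreover have "v $ (i - 1) = 0" using v(2) i by blast
    ultimately show "sb (i - 1) x = 0" by simp
  qed
  then show "n > 0 \<and> sb n x = sb (n - 1) x \<and> (\<forall>i\<in>Io. sb (i - 1) x = 0)" using s by blast
next
  assume h: "n > 0 \<and> sb n x = sb (n - 1) x \<and> (\<forall>i\<in>Io. sb (i - 1) x = 0)"
  have "eigenvector (path_laplacian n) (vec n (\<lambda>j. sb j x)) x" using h eig_L_constr by blast
  moreover have "\<forall>j\<in>Io. vec n (\<lambda>j. sb j x) $ (j - 1) = 0"
  proof
    fix j assume j: "j \<in> Io"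
    then have "j \<in> {1..n}" using assms by blast
    then have "j - 1 < n" by auto
    then show "vec n (\<lambda>j. sb j x) $ (j - 1) = 0" using h j by simp
  qed
  ultimately show "unreachable_eigenvalue n Io x" unfolding unreachable_eigenvalue_def by blast
qed

lemma step_iff:
  assumes "sb p x = 0" "p < q"
  shows "sb q x = 0 \<longleftrightarrow> sa (q - p) x = 0"
proof -
  have "sb q x = - sb (p - 1) x * sa (q - p) x" using sb_shift[OF assms(1), of "q - p"] assms(2) by simp
  then show ?thesis using sb_prev_nz[OF assms(1)] by simp
qed

lemma end_iff:
  assumes "sb p x = 0" "p < n"
  shows "sb n x = sb (n - 1) x \<longleftrightarrow> sb (n - 1 - p) x = 0"
proof -
  define q where "q = n - 1 - p"
  have n1: "n = p + (q + 1)" "n - 1 = p + q" using assms(2) by (auto simp: q_def)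
  have "sb n x = - sb (p - 1) x * sa (q+1) x" using n1(1) sb_shift[OF assms(1), of "q+1"] by simp
  moreover have "sb (n - 1) x = - sb (p - 1) x * sa q x" using n1(2) sb_shift[OF assms(1), of q] by simp
  ultimately
  have "sb n x = sb (n - 1) x \<longleftrightarrow> sa (q+1) x = sa q x" using sb_prev_nz[OF assms(1)] by auto
  also have "\<dots> \<longleftrightarrow> sb q x = 0" using sb_sa[of q x] by simp
  finally show ?thesis by (simp add: q_def)
qed

lemma common_iff:
  assumes ne: "is \<noteq> []" and srt: "sorted_wrt (<) is" and sub: "set is \<subseteq> {1..n}"
  shows "common_eigenvalue n is x \<longleftrightarrow> n > 0 \<and> sb n x = sb (n - 1) x \<and> (\<forall>i\<in>set is. sb (i - 1) x = 0)"
proof -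
  define m where "m = length is"
  define p where "p k = is ! k - 1" for k
  have m: "m > 0" using ne by (simp add: m_def)
  have inr: "is ! k \<in> {1..n}" if "k < m" for k
  proof -
    have "is ! k \<in> set is" using that by (simp add: m_def)
    then show ?thesis using sub by blast
  qed
  have ge1: "is ! k \<ge> 1" if "k < m" for k using inr[OF that] by simp
  have len: "is ! k \<le> n" if "k < m" for k using inr[OF that] by simp
  have mono: "is ! k < is ! l" if "k < l" "l < m" for k l
    using srt that by (simp add: sorted_wrt_iff_nth_less m_def)
  have n0: "n > 0" using len[of 0] ge1[of 0] m by simp
  have plt: "p k < p (k+1)" if "k + 1 < m" for k using mono[of k "k+1"] ge1[of k] that by (simp add: p_def)
  have pn: "p k < n" if "k < m" for k using len[of k] ge1[of k] that by (simp add: p_def)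
  have M: "Suc (is ! (k+1) - is ! k - 1) = p (k+1) - p k" if "k + 1 < m" for k
    using mono[of k "k+1"] ge1[of k] that by (simp add: p_def)
  have chain: "(\<forall>k\<le>K. sb (p k) x = 0) \<longleftrightarrow> sb (p 0) x = 0 \<and> (\<forall>k<K. sa (p (k+1) - p k) x = 0)"
    if "K < m" for K
    using that
  proof (induction K)
    case 0 then show ?case by simp
  next
    case (Suc K)
    have IH: "(\<forall>k\<le>K. sb (p k) x = 0) \<longleftrightarrow> sb (p 0) x = 0 \<and> (\<forall>k<K. sa (p (k+1) - p k) x = 0)"
      using Suc by simp
    show ?case
    proof
      assume h: "\<forall>k\<le>Suc K. sb (p k) x = 0"
      then have "sb (p K) x = 0" "sb (p (K+1)) x = 0" by auto
      then have "sa (p (K+1) - p K) x = 0" using step_iff plt[of K] Suc.prems by simp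
      then show "sb (p 0) x = 0 \<and> (\<forall>k<Suc K. sa (p (k+1) - p k) x = 0)"
        using h IH less_Suc_eq by auto
    next
      assume h: "sb (p 0) x = 0 \<and> (\<forall>k<Suc K. sa (p (k+1) - p k) x = 0)"
      then have a: "\<forall>k\<le>K. sb (p k) x = 0" using IH by auto
      then have "sb (p (K+1)) x = 0" using step_iff[of "p K" x "p (K+1)"] plt[of K] Suc.prems h by simp
      then show "\<forall>k\<le>Suc K. sb (p k) x = 0" using a le_Suc_eq by auto
    qed
  qed
  have setis: "(\<forall>i\<in>set is. sb (i - 1) x = 0) \<longleftrightarrow> (\<forall>k\<le>m-1. sb (p k) x = 0)"
  proof
    assume h: "\<forall>i\<in>set is. sb (i - 1) x = 0"
    show "\<forall>k\<le>m-1. sb (p k) x = 0"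
    proof (intro allI impI)
      fix k assume "k \<le> m - 1"
      then have "k < length is" using m unfolding m_def by linarith
      then have "is ! k \<in> set is" by simp
      then show "sb (p k) x = 0" using h by (simp add: p_def)
    qed
  next
    assume h: "\<forall>k\<le>m-1. sb (p k) x = 0"
    show "\<forall>i\<in>set is. sb (i - 1) x = 0"
    proof
      fix i assume "i \<in> set is"
      then obtain k where "k < m" "i = is ! k" by (auto simp: in_set_conv_nth m_def)
      then show "sb (i - 1) x = 0" using h by (simp add: p_def)
    qed
  qed
  have hd: "hd is - 1 = p 0" using ne by (simp add: p_def hd_conv_nth)
  have lst: "n - last is = n - 1 - p (m - 1)" using ne ge1[of "m-1"] m by (simp add: p_def last_conv_nth m_def)
  have common: "common_eigenvalue n is x \<longleftrightarrow> sb (p 0) x = 0 \<and> (\<forall>k<m-1. sa (p (k+1) - p k) x = 0)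
     \<and> sb (n - 1 - p (m-1)) x = 0"
    unfolding common_eigenvalue_def eig_N eig_M hd lst
    using M by (auto simp: m_def)
  show ?thesis
  proof
    assume c: "common_eigenvalue n is x"
    then have a: "\<forall>k\<le>m-1. sb (p k) x = 0" using chain[of "m-1"] m common by auto
    then have "sb n x = sb (n - 1) x" using end_iff[of "p (m-1)" x n] pn[of "m-1"] m c common by auto
    then show "n > 0 \<and> sb n x = sb (n - 1) x \<and> (\<forall>i\<in>set is. sb (i - 1) x = 0)" using a setis n0 by blast
  next
    assume h: "n > 0 \<and> sb n x = sb (n - 1) x \<and> (\<forall>i\<in>set is. sb (i - 1) x = 0)"
    then have a: "\<forall>k\<le>m-1. sb (p k) x = 0" using setis by blast
    then have "sb (n - 1 - p (m-1)) x = 0" using end_iff[of "p (m-1)" x n] pn[of "m-1"] m h by auto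
    then show "common_eigenvalue n is x" using a chain[of "m-1"] m common by auto
  qed
qed


lemma cos_three_term: "cos ((u::real) + v) = 2 * cos u * cos v - cos (u - v)"
  by (simp add: cos_add cos_diff)

lemma sb_cos: "sb j (2 - 2 * cos (2 * a)) * cos a = cos ((2 * real j + 1) * a)
     \<and> sb (Suc j) (2 - 2 * cos (2 * a)) * cos a = cos ((2 * real (Suc j) + 1) * a)"
proof (induction j)
  case 0
  have "cos (3 * a) = cos (2 * a + a)" by simp
  also have "\<dots> = cos (2 * a) * cos a - sin (2 * a) * sin a" by (rule cos_add)
  also have "\<dots> = (2 * cos (2 * a) - 1) * cos a"
  proof -
    have "sin (2 * a) * sin a = (1 - cos (2 * a)) * cos a"
      unfolding sin_double cos_double_sin by (simp add: power2_eq_square algebra_simps)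
    then show ?thesis by (simp add: algebra_simps)
  qed
  finally have "cos (3 * a) = (2 * cos (2 * a) - 1) * cos a" .
  moreover have "(2 * real (Suc 0) + 1) * a = 3 * a" by simp
  ultimately have "sb (Suc 0) (2 - 2 * cos (2 * a)) * cos a = cos ((2 * real (Suc 0) + 1) * a)"
    by (simp add: algebra_simps)
  then show ?case by simp
next
  case (Suc j)
  let ?x = "2 - 2 * cos (2 * a)"
  have e1: "(2 * real (Suc (Suc j)) + 1) * a = (2 * real (Suc j) + 1) * a + 2 * a"
    by (simp add: algebra_simps)
  have e2: "(2 * real (Suc j) + 1) * a - 2 * a = (2 * real j + 1) * a"
    by (simp add: algebra_simps)
  have "sb (Suc (Suc j)) ?x * cos a = (2 - ?x) * (sb (Suc j) ?x * cos a) - sb j ?x * cos a"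
    by (simp add: algebra_simps)
  also have "\<dots> = 2 * cos (2 * a) * cos ((2 * real (Suc j) + 1) * a) - cos ((2 * real j + 1) * a)"
    using Suc by simp
  also have "\<dots> = cos ((2 * real (Suc (Suc j)) + 1) * a)"
    unfolding e1 cos_three_term[of "(2 * real (Suc j) + 1) * a" "2 * a"] e2 by (simp add: algebra_simps)
  finally show ?case using Suc by simp
qed

definition lam :: "nat \<Rightarrow> nat \<Rightarrow> real" where
  "lam n k = 2 - 2 * cos (real k * pi / real n)"

lemma lam_root:
  assumes "k < n"
  shows "sb n (lam n k) = sb (n - 1) (lam n k)"
proof -
  define a where "a = real k * pi / (2 * real n)"
  have n: "n > 0" using assms by simp
  have lam: "lam n k = 2 - 2 * cos (2 * a)" by (simp add: lam_def a_def)
  have a0: "0 \<le> a" by (simp add: a_def)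
  have "real k < real n" using assms by simp
  then have "real k * pi < real n * pi" by simp
  then have a1: "a < pi / 2" using n by (simp add: a_def field_simps)
  have ca: "cos a > 0" by (rule cos_gt_zero_pi) (use a0 a1 in auto)
  have ka: "2 * real n * a = real k * pi" using n by (simp add: a_def field_simps)
  have "sb n (lam n k) * cos a = cos ((2 * real n + 1) * a)" using sb_cos[of n a] lam by simp
  also have "(2 * real n + 1) * a = real k * pi + a" using ka by (simp add: algebra_simps)
  also have "cos (real k * pi + a) = cos (real k * pi) * cos a" by (simp add: cos_add)
  finally have s1: "sb n (lam n k) * cos a = cos (real k * pi) * cos a" .
  have "sb (n - 1) (lam n k) * cos a = cos ((2 * real (n - 1) + 1) * a)" using sb_cos[of "n - 1" a] lam by simp
  also have "(2 * real (n - 1) + 1) * a = real k * pi - a" using ka n by (simp add: algebra_simps of_nat_diff)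
  also have "cos (real k * pi - a) = cos (real k * pi) * cos a" by (simp add: cos_diff)
  finally have s2: "sb (n - 1) (lam n k) * cos a = cos (real k * pi) * cos a" .
  show ?thesis using s1 s2 ca by simp
qed

lemma lam_inj:
  assumes "k < n" "l < n" "lam n k = lam n l"
  shows "k = l"
proof -
  have n: "real n > 0" using assms by simp
  have c: "cos (real k * pi / real n) = cos (real l * pi / real n)" using assms(3) by (simp add: lam_def)
  have b: "0 \<le> real j * pi / real n \<and> real j * pi / real n \<le> pi" if "j < n" for j
  proof -
    have "real j \<le> real n" using that by simp
    then have "real j * pi \<le> real n * pi" by simp
    then show ?thesis using n by (simp add: field_simps)
  qed
  have "real k * pi / real n = real l * pi / real n"
    using cos_inj_pi b[OF assms(1)] b[OF assms(2)] c by blast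
  then show ?thesis using n by simp
qed


lemma mult_unit_col:
  assumes "(A :: 'a :: comm_ring_1 mat) \<in> carrier_mat r c" "i < c"
  shows "A *\<^sub>v unit_vec c i = col A i"
  by (rule eq_vecI) (use assms in auto)

context vec_space begin

lemma max_indpt_exists:
  assumes "A \<in> carrier_mat n nc"
  shows "\<exists>S. maximal S (\<lambda>T. T \<subseteq> set (cols A) \<and> lin_indpt T)"
  using maximal_exists[of "(\<lambda>T. T \<subseteq> set (cols A) \<and> lin_indpt T)" "card (set (cols A))" "{}"]
  by (meson List.finite_set card_mono empty_iff empty_subsetI finite_lin_indpt2 rev_finite_subset)

lemma rank_le_card_cols:
  assumes "A \<in> carrier_mat n nc"
  shows "rank A \<le> card (set (cols A))"
proof -
  obtain S where S: "maximal S (\<lambda>T. T \<subseteq> set (cols A) \<and> lin_indpt T)"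
    using max_indpt_exists[OF assms] by blast
  then have "card S \<le> card (set (cols A))" by (simp add: card_mono maximal_def)
  then show ?thesis using rank_card_indpt[OF assms S] by simp
qed

lemma lincomb_scalar:
  assumes X: "finite X" "X \<subseteq> carrier_vec n" and u: "u \<in> carrier_vec n"
  shows "lincomb a X \<bullet> u = (\<Sum>x\<in>X. a x * (x \<bullet> u))"
proof -
  have "lincomb a X \<bullet> u = (\<Sum>i\<in>{0..<n}. lincomb a X $ i * u $ i)"
    using u lincomb_dim[OF X] by (simp add: scalar_prod_def)
  also have "\<dots> = (\<Sum>i\<in>{0..<n}. (\<Sum>x\<in>X. a x * x $ i) * u $ i)"
    using lincomb_index[OF _ X(2)] by simp
  also have "\<dots> = (\<Sum>i\<in>{0..<n}. \<Sum>x\<in>X. a x * (x $ i * u $ i))"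
    by (simp add: sum_distrib_right mult.assoc)
  also have "\<dots> = (\<Sum>x\<in>X. \<Sum>i\<in>{0..<n}. a x * (x $ i * u $ i))"
    by (rule sum.swap)
  also have "\<dots> = (\<Sum>x\<in>X. a x * (\<Sum>i\<in>{0..<n}. x $ i * u $ i))"
    by (simp add: sum_distrib_left)
  also have "\<dots> = (\<Sum>x\<in>X. a x * (x \<bullet> u))"
    by (rule sum.cong) (use u in \<open>auto simp: scalar_prod_def\<close>)
  finally show ?thesis .
qed

lemma KER2:
  assumes A: "(A :: 'a mat) \<in> carrier_mat n c"
  shows "rank A = c \<longleftrightarrow> (\<forall>v\<in>carrier_vec c. A *\<^sub>v v = 0\<^sub>v n \<longrightarrow> v = 0\<^sub>v c)"
proof
  assume r: "rank A = c"
  have dist: "distinct (cols A)"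
  proof (rule ccontr)
    assume "\<not> distinct (cols A)"
    then have "card (set (cols A)) < length (cols A)"
      by (metis card_distinct card_length le_neq_implies_less)
    then have "card (set (cols A)) < c" using A by simp
    then show False using rank_le_card_cols[OF A] r by simp
  qed
  have li: "lin_indpt (set (cols A))" using full_rank_lin_indpt[OF A r dist] .
  show "\<forall>v\<in>carrier_vec c. A *\<^sub>v v = 0\<^sub>v n \<longrightarrow> v = 0\<^sub>v c"
    using lin_depI[OF A _ _ _ dist] li by blast
next
  assume k: "\<forall>v\<in>carrier_vec c. A *\<^sub>v v = 0\<^sub>v n \<longrightarrow> v = 0\<^sub>v c"
  have dist: "distinct (cols A)"
  proof (rule ccontr)
    assume "\<not> distinct (cols A)"
    then obtain i j where ij0: "i < length (cols A)" "j < length (cols A)" "i \<noteq> j" "cols A ! i = cols A ! j"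
      unfolding distinct_conv_nth by blast
    have dc: "dim_col A = c" using A by simp
    have ij: "i < c" "j < c" "i \<noteq> j" "col A i = col A j" using ij0 dc by auto
    let ?v = "unit_vec c i - unit_vec c j :: 'a vec"
    have "A *\<^sub>v ?v = A *\<^sub>v unit_vec c i - A *\<^sub>v unit_vec c j"
      by (rule mult_minus_distrib_mat_vec[OF A unit_vec_carrier unit_vec_carrier])
    also have "\<dots> = col A i - col A j" using mult_unit_col[OF A] ij(1,2) by simp
    also have "\<dots> = 0\<^sub>v n" unfolding ij(4) by (metis A carrier_matD(1) col_dim minus_cancel_vec)
    finally have z: "A *\<^sub>v ?v = 0\<^sub>v n" .
    have vc: "?v \<in> carrier_vec c" by simp
    have vz: "?v = 0\<^sub>v c" using mp[OF bspec[OF k vc] z] .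
    have "?v $ i = 0" using vz ij(1) by (metis index_zero_vec(1))
    then show False using ij by simp
  qed
  have li: "lin_indpt (set (cols A))"
  proof (rule ccontr)
    assume "\<not> lin_indpt (set (cols A))"
    then obtain v where "v \<in> carrier_vec c" "v \<noteq> 0\<^sub>v c" "A *\<^sub>v v = 0\<^sub>v n"
      using lin_depE[OF A _ dist] by blast
    then show False using k by auto
  qed
  show "rank A = c" using lin_indpt_full_rank[OF A dist li] .
qed


lemma KER1:
  assumes A: "(A :: 'a mat) \<in> carrier_mat r n"
    and sd: "\<And>u :: 'a vec. u \<in> carrier_vec n \<Longrightarrow> u \<bullet> u = 0 \<Longrightarrow> u = 0\<^sub>v n"
  shows "rank (transpose_mat A) = n \<longleftrightarrow> (\<forall>u\<in>carrier_vec n. A *\<^sub>v u = 0\<^sub>v r \<longrightarrow> u = 0\<^sub>v n)"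
proof -
  let ?T = "transpose_mat A"
  have T: "?T \<in> carrier_mat n r" using A by simp
  obtain S where S: "maximal S (\<lambda>T. T \<subseteq> set (cols ?T) \<and> lin_indpt T)"
    using max_indpt_exists[OF T] by blast
  have Ssub: "S \<subseteq> set (rows A)" and Sli: "lin_indpt S" using S by (auto simp: maximal_def)
  have rowsc: "set (rows A) \<subseteq> carrier_vec n" using A by (auto simp: rows_def)
  have Sc: "S \<subseteq> carrier_vec n" using Ssub rowsc by blast
  have Sfin: "finite S" using Ssub finite_subset by blast
  have rk: "rank ?T = card S" using rank_card_indpt[OF T S] .
  have rowdot: "s \<bullet> u = 0" if sin: "s \<in> set (rows A)" and "u \<in> carrier_vec n" and z: "A *\<^sub>v u = 0\<^sub>v r" for s u
  proof -
    obtain j where j: "j < r" "s = row A j" using sin A by (auto simp: rows_def)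
    have "(A *\<^sub>v u) $ j = row A j \<bullet> u" using j A by simp
    then show ?thesis using z j by simp
  qed
  have spandot: "x \<bullet> u = 0" if xin: "x \<in> span S" and "u \<in> carrier_vec n" and "\<forall>s\<in>S. s \<bullet> u = 0" for x u
  proof -
    obtain a X where aX: "X \<subseteq> S" "lincomb a X = x" using xin unfolding span_def by blast
    have Xf: "finite X" using aX(1) Sfin finite_subset by blast
    have Xc: "X \<subseteq> carrier_vec n" using aX(1) Sc by blast
    have "x \<bullet> u = (\<Sum>y\<in>X. a y * (y \<bullet> u))" using lincomb_scalar[OF Xf Xc that(2), where a=a] aX(2) by simp
    also have "\<dots> = 0" using that(3) aX(1) by (intro sum.neutral) auto
    finally show ?thesis .
  qed
  show ?thesis
  proof
    assume "rank ?T = n"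
    then have cS: "card S = n" using rk by simp
    have "basis S" by (rule dim_li_is_basis) (use Sfin Sc Sli cS dim_is_n in auto)
    then have spS: "span S = carrier_vec n" unfolding basis_def by simp
    show "\<forall>u\<in>carrier_vec n. A *\<^sub>v u = 0\<^sub>v r \<longrightarrow> u = 0\<^sub>v n"
    proof (intro ballI impI)
      fix u assume u: "u \<in> carrier_vec n" and z: "A *\<^sub>v u = 0\<^sub>v r"
      have "\<forall>s\<in>S. s \<bullet> u = 0" using rowdot Ssub u z by blast
      then have "u \<bullet> u = 0" using spandot[of u u] spS u by blast
      then show "u = 0\<^sub>v n" using sd u by blast
    qed
  next
    assume k: "\<forall>u\<in>carrier_vec n. A *\<^sub>v u = 0\<^sub>v r \<longrightarrow> u = 0\<^sub>v n"
    show "rank ?T = n"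
    proof (rule ccontr)
      assume ne: "rank ?T \<noteq> n"
      have "card S \<le> n" using li_le_dim(2)[OF fin_dim _ Sli] Sc dim_is_n by simp
      then have lt: "card S < n" using ne rk by simp
      obtain ss where ss: "set ss = S" "distinct ss" using finite_distinct_list[OF Sfin] by blast
      have lss: "length ss = card S" using ss distinct_card by fastforce
      define P where "P = mat n n (\<lambda>(i,j). if i < length ss then (ss ! i) $ j else (0::'a))"
      have Pc: "P \<in> carrier_mat n n" by (simp add: P_def)
      have TP: "transpose_mat P \<in> carrier_mat n n" using Pc by simp
      have "transpose_mat P *\<^sub>v unit_vec n (n - 1) = col (transpose_mat P) (n - 1)"
        by (rule mult_unit_col[OF TP]) (use lt in simp)
      also have "\<dots> = row P (n - 1)" using lt by (simp add: P_def)
      also have "\<dots> = 0\<^sub>v n" using lt lss by (auto simp: P_def)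
      finally have z: "transpose_mat P *\<^sub>v unit_vec n (n - 1) = 0\<^sub>v n" .
      have "unit_vec n (n - 1) \<noteq> (0\<^sub>v n :: 'a vec)"
      proof
        assume "unit_vec n (n - 1) = (0\<^sub>v n :: 'a vec)"
        then have "unit_vec n (n - 1) $ (n - 1) = (0\<^sub>v n :: 'a vec) $ (n - 1)" by simp
        then show False using lt by simp
      qed
      then have "det (transpose_mat P) = 0"
        using det_0_iff_vec_prod_zero[OF TP] z unit_vec_carrier by blast
      then have "det P = 0" using det_transpose[OF Pc] by simp
      then obtain v where v: "v \<in> carrier_vec n" "v \<noteq> 0\<^sub>v n" "P *\<^sub>v v = 0\<^sub>v n"
        using det_0_iff_vec_prod_zero[OF Pc] by blast
      have Sdot: "\<forall>s\<in>S. s \<bullet> v = 0"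
      proof
        fix s assume "s \<in> S"
        then obtain i where i: "i < length ss" "s = ss ! i" using ss by (metis in_set_conv_nth)
        have sc: "ss ! i \<in> carrier_vec n" using i ss Sc nth_mem by blast
        have "row P i = ss ! i"
          by (rule eq_vecI) (use i lss lt sc in \<open>auto simp: P_def\<close>)
        moreover have "(P *\<^sub>v v) $ i = row P i \<bullet> v" using i lss lt Pc by simp
        ultimately show "s \<bullet> v = 0" using v(3) i lss lt by simp
      qed
      have "A *\<^sub>v v = 0\<^sub>v r"
      proof (rule eq_vecI)
        fix j assume j: "j < dim_vec (0\<^sub>v r :: 'a vec)"
        then have j': "j < r" by simp
        have rj: "row A j \<in> carrier_vec n" using A by (metis carrier_matD(2) row_carrier)
        have "row A j \<in> span S"
        proof (cases "row A j \<in> S")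
          case True then show ?thesis using in_own_span[OF Sc] by blast
        next
          case False
          have "row A j \<in> set (rows A)" using j' A by (auto simp: rows_def)
          then have "\<not> lin_indpt (S \<union> {row A j})" using S False unfolding maximal_def by auto
          then show ?thesis using lin_dep_iff_in_span[OF Sc Sli rj False] by blast
        qed
        then have "row A j \<bullet> v = 0" using spandot Sdot v(1) by blast
        then show "(A *\<^sub>v v) $ j = 0\<^sub>v r $ j" using j' A by simp
      qed (use A in simp)
      then show False using k v by blast
    qed
  qed
qed
end


lemma L_carrier[simp]: "path_laplacian n \<in> carrier_mat n n"
  by (simp add: path_laplacian_def)

lemma L_sym: "transpose_mat (path_laplacian n) = path_laplacian n"
  by (rule eq_matI) (auto simp: path_laplacian_def)

lemma L_selfadj:
  assumes "a \<in> carrier_vec n" "b \<in> carrier_vec n"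
  shows "(path_laplacian n *\<^sub>v a) \<bullet> b = a \<bullet> (path_laplacian n *\<^sub>v b)"
  using transpose_vec_mult_scalar[OF L_carrier assms(2) assms(1)] L_sym by simp

definition wv :: "nat \<Rightarrow> nat \<Rightarrow> real vec" where
  "wv n k = vec n (\<lambda>j. sb j (lam n k))"

lemma wv_carrier[simp]: "wv n k \<in> carrier_vec n" by (simp add: wv_def)
lemma wv_dim[simp]: "dim_vec (wv n k) = n" by (simp add: wv_def)

lemma wv_eig: "k < n \<Longrightarrow> eigenvector (path_laplacian n) (wv n k) (lam n k)"
  unfolding wv_def by (rule eig_L_constr) (use lam_root in auto)

lemma wv_L: "k < n \<Longrightarrow> path_laplacian n *\<^sub>v wv n k = lam n k \<cdot>\<^sub>v wv n k"
  using wv_eig unfolding eigenvector_def by simp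

lemma wv_orth:
  assumes "k < n" "l < n" "k \<noteq> l"
  shows "wv n k \<bullet> wv n l = 0"
proof -
  have "lam n k * (wv n k \<bullet> wv n l) = (path_laplacian n *\<^sub>v wv n k) \<bullet> wv n l"
    using wv_L[OF assms(1)] by simp
  also have "\<dots> = wv n k \<bullet> (path_laplacian n *\<^sub>v wv n l)" by (rule L_selfadj) auto
  also have "\<dots> = lam n l * (wv n k \<bullet> wv n l)" using wv_L[OF assms(2)] by simp
  finally have "(lam n k - lam n l) * (wv n k \<bullet> wv n l) = 0" by (simp add: algebra_simps)
  moreover have "lam n k \<noteq> lam n l" using lam_inj assms by blast
  ultimately show ?thesis by simp
qed

lemma wv_pos:
  assumes "k < n"
  shows "wv n k \<bullet> wv n k > 0"
proof -
  have "wv n k \<bullet> wv n k = (\<Sum>j\<in>{0..<n}. sb j (lam n k) * sb j (lam n k))"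
    by (simp add: scalar_prod_def wv_def)
  also have "\<dots> \<ge> sb 0 (lam n k) * sb 0 (lam n k)"
    by (rule member_le_sum) (use assms in auto)
  finally show ?thesis by simp
qed

definition Vm :: "nat \<Rightarrow> real mat" where
  "Vm n = mat n n (\<lambda>(j,k). wv n k $ j)"
definition Wm :: "nat \<Rightarrow> real mat" where
  "Wm n = mat n n (\<lambda>(k,j). wv n k $ j / (wv n k \<bullet> wv n k))"

lemma Vm_carrier[simp]: "Vm n \<in> carrier_mat n n" by (simp add: Vm_def)
lemma Wm_carrier[simp]: "Wm n \<in> carrier_mat n n" by (simp add: Wm_def)
lemma Vm_dim[simp]: "dim_row (Vm n) = n" "dim_col (Vm n) = n" by (simp_all add: Vm_def)
lemma Wm_dim[simp]: "dim_row (Wm n) = n" "dim_col (Wm n) = n" by (simp_all add: Wm_def)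

lemma col_Vm: "k < n \<Longrightarrow> col (Vm n) k = wv n k"
  by (rule eq_vecI) (auto simp: Vm_def wv_def)

lemma row_Wm: "k < n \<Longrightarrow> row (Wm n) k = (1 / (wv n k \<bullet> wv n k)) \<cdot>\<^sub>v wv n k"
  by (rule eq_vecI) (auto simp: Wm_def wv_def)

lemma WV: "Wm n * Vm n = 1\<^sub>m n"
proof (rule eq_matI)
  fix k l assume kl: "k < dim_row (1\<^sub>m n :: real mat)" "l < dim_col (1\<^sub>m n :: real mat)"
  then have k: "k < n" and l: "l < n" by auto
  have "(Wm n * Vm n) $$ (k, l) = row (Wm n) k \<bullet> col (Vm n) l" using k l by simp
  also have "\<dots> = (wv n k \<bullet> wv n l) / (wv n k \<bullet> wv n k)"
    unfolding row_Wm[OF k] col_Vm[OF l] by simp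
  also have "\<dots> = (1\<^sub>m n :: real mat) $$ (k, l)"
    using wv_orth[OF k l] wv_pos[OF k] k l by (cases "k = l") auto
  finally show "(Wm n * Vm n) $$ (k, l) = (1\<^sub>m n :: real mat) $$ (k, l)" .
qed auto

lemma VW: "Vm n * Wm n = 1\<^sub>m n"
  by (rule mat_mult_left_right_inverse[OF Wm_carrier Vm_carrier WV])

lemma expand:
  assumes "u \<in> carrier_vec n"
  shows "u = Vm n *\<^sub>v (Wm n *\<^sub>v u)"
proof -
  have "Vm n *\<^sub>v (Wm n *\<^sub>v u) = (Vm n * Wm n) *\<^sub>v u"
    using assoc_mult_mat_vec[OF Vm_carrier Wm_carrier assms] by simp
  then show ?thesis using VW assms by simp
qed


definition Dg :: "nat \<Rightarrow> real mat" where
  "Dg n = mat n n (\<lambda>(k,l). if k = l then lam n k else 0)"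

lemma Dg_carrier[simp]: "Dg n \<in> carrier_mat n n" by (simp add: Dg_def)
lemma Dg_dim[simp]: "dim_row (Dg n) = n" "dim_col (Dg n) = n" by (simp_all add: Dg_def)

lemma col_Dg: "k < n \<Longrightarrow> col (Dg n) k = lam n k \<cdot>\<^sub>v unit_vec n k"
  by (rule eq_vecI) (auto simp: Dg_def unit_vec_def)
lemma row_Dg: "k < n \<Longrightarrow> row (Dg n) k = lam n k \<cdot>\<^sub>v unit_vec n k"
  by (rule eq_vecI) (auto simp: Dg_def unit_vec_def)

lemma LV_mat: "path_laplacian n * Vm n = Vm n * Dg n"
proof (rule eq_matI)
  fix i k assume ik: "i < dim_row (Vm n * Dg n)" "k < dim_col (Vm n * Dg n)"
  then have i: "i < n" and k: "k < n" by auto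
  have "(path_laplacian n * Vm n) $$ (i,k) = row (path_laplacian n) i \<bullet> col (Vm n) k"
    using i k by (simp add: path_laplacian_def)
  also have "\<dots> = (path_laplacian n *\<^sub>v wv n k) $ i"
    using i k col_Vm[OF k] by (simp add: path_laplacian_def)
  also have "\<dots> = lam n k * wv n k $ i" using wv_L[OF k] i by simp
  also have "\<dots> = row (Vm n) i \<bullet> col (Dg n) k"
    unfolding col_Dg[OF k] using i k by (simp add: Vm_def)
  also have "\<dots> = (Vm n * Dg n) $$ (i,k)" using i k by simp
  finally show "(path_laplacian n * Vm n) $$ (i,k) = (Vm n * Dg n) $$ (i,k)" .
qed (auto simp: path_laplacian_def)

lemma LV:
  assumes c: "c \<in> carrier_vec n"
  shows "path_laplacian n *\<^sub>v (Vm n *\<^sub>v c) = Vm n *\<^sub>v vec n (\<lambda>k. lam n k * c $ k)"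
proof -
  have "path_laplacian n *\<^sub>v (Vm n *\<^sub>v c) = (path_laplacian n * Vm n) *\<^sub>v c"
    using assoc_mult_mat_vec[OF L_carrier Vm_carrier c] by simp
  also have "\<dots> = (Vm n * Dg n) *\<^sub>v c" by (simp add: LV_mat)
  also have "\<dots> = Vm n *\<^sub>v (Dg n *\<^sub>v c)" using assoc_mult_mat_vec[OF Vm_carrier Dg_carrier c] by simp
  also have "Dg n *\<^sub>v c = vec n (\<lambda>k. lam n k * c $ k)"
    by (rule eq_vecI) (use c in \<open>auto simp: row_Dg\<close>)
  finally show ?thesis .
qed

lemma idx_helper:
  assumes "a \<in> carrier_vec n" "b \<in> carrier_vec n" "p < n" "a $ p = 0" "b $ p = 0"
  shows "(a - (\<mu>::real) \<cdot>\<^sub>v b) $ p = 0"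
proof -
  have "dim_vec (\<mu> \<cdot>\<^sub>v b) = n" using assms(2) by simp
  then have "(a - \<mu> \<cdot>\<^sub>v b) $ p = a $ p - (\<mu> \<cdot>\<^sub>v b) $ p" using assms(3) by simp
  also have "\<dots> = 0" using assms by simp
  finally show ?thesis .
qed

fun Qop :: "nat \<Rightarrow> real list \<Rightarrow> real vec \<Rightarrow> real vec" where
  "Qop n [] u = u"
| "Qop n (\<mu> # ls) u = path_laplacian n *\<^sub>v Qop n ls u - \<mu> \<cdot>\<^sub>v Qop n ls u"

lemma Qop_carrier: "u \<in> carrier_vec n \<Longrightarrow> Qop n ls u \<in> carrier_vec n"
proof (induction ls)
  case (Cons \<mu> ls)
  then have "path_laplacian n *\<^sub>v Qop n ls u \<in> carrier_vec n"
    using mult_mat_vec_carrier[OF L_carrier] by blast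
  then show ?case using Cons by simp
qed simp

lemma Qop_V:
  assumes c: "c \<in> carrier_vec n"
  shows "Qop n ls (Vm n *\<^sub>v c) = Vm n *\<^sub>v vec n (\<lambda>k. c $ k * prod_list (map (\<lambda>\<mu>. lam n k - \<mu>) ls))"
proof (induction ls)
  case Nil
  have "vec n (\<lambda>k. c $ k * prod_list (map (\<lambda>\<mu>. lam n k - \<mu>) [])) = c" using c by auto
  then show ?case by simp
next
  case (Cons \<mu> ls)
  define c' where "c' = vec n (\<lambda>k. c $ k * prod_list (map (\<lambda>\<mu>. lam n k - \<mu>) ls))"
  have c'c: "c' \<in> carrier_vec n" by (simp add: c'_def)
  have "Qop n (\<mu> # ls) (Vm n *\<^sub>v c) = path_laplacian n *\<^sub>v (Vm n *\<^sub>v c') - \<mu> \<cdot>\<^sub>v (Vm n *\<^sub>v c')"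
    using Cons by (simp add: c'_def)
  also have "\<dots> = Vm n *\<^sub>v vec n (\<lambda>k. lam n k * c' $ k) - Vm n *\<^sub>v (\<mu> \<cdot>\<^sub>v c')"
    using LV[OF c'c] mult_mat_vec[OF Vm_carrier c'c] by simp
  also have "\<dots> = Vm n *\<^sub>v (vec n (\<lambda>k. lam n k * c' $ k) - \<mu> \<cdot>\<^sub>v c')"
    by (rule mult_minus_distrib_mat_vec[symmetric]) (use c'c in auto)
  also have "vec n (\<lambda>k. lam n k * c' $ k) - \<mu> \<cdot>\<^sub>v c'
     = vec n (\<lambda>k. c $ k * prod_list (map (\<lambda>\<mu>. lam n k - \<mu>) (\<mu> # ls)))"
    by (rule eq_vecI) (auto simp: c'_def algebra_simps)
  finally show ?case .
qed

lemma Qop_Z: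
  assumes u: "u \<in> carrier_vec n" and I: "\<forall>i\<in>I. i - 1 < n"
  shows "(\<forall>j < d + length ls. \<forall>i\<in>I. (path_laplacian n ^\<^sub>m j *\<^sub>v u) $ (i - 1) = 0) \<Longrightarrow>
         (\<forall>j < d. \<forall>i\<in>I. (path_laplacian n ^\<^sub>m j *\<^sub>v Qop n ls u) $ (i - 1) = 0)"
proof (induction ls arbitrary: d)
  case Nil then show ?case by simp
next
  case (Cons \<mu> ls)
  let ?L = "path_laplacian n"
  let ?y = "Qop n ls u"
  have yc: "?y \<in> carrier_vec n" using Qop_carrier[OF u] .
  have IH: "\<forall>j < d + 1. \<forall>i\<in>I. (?L ^\<^sub>m j *\<^sub>v ?y) $ (i - 1) = 0"
    using Cons.IH[of "d+1"] Cons.prems by simp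
  show ?case
  proof (intro allI impI ballI)
    fix j i assume j: "j < d" and i: "i \<in> I"
    have Lj: "?L ^\<^sub>m j \<in> carrier_mat n n" by simp
    have "?L ^\<^sub>m j *\<^sub>v Qop n (\<mu> # ls) u = ?L ^\<^sub>m j *\<^sub>v (?L *\<^sub>v ?y) - ?L ^\<^sub>m j *\<^sub>v (\<mu> \<cdot>\<^sub>v ?y)"
      using mult_minus_distrib_mat_vec[OF Lj _ _, of "?L *\<^sub>v ?y" "\<mu> \<cdot>\<^sub>v ?y"] yc
        mult_mat_vec_carrier[OF L_carrier yc] by simp
    also have "?L ^\<^sub>m j *\<^sub>v (?L *\<^sub>v ?y) = ?L ^\<^sub>m (Suc j) *\<^sub>v ?y"
      using assoc_mult_mat_vec[OF Lj L_carrier yc] by simp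
    also have "?L ^\<^sub>m j *\<^sub>v (\<mu> \<cdot>\<^sub>v ?y) = \<mu> \<cdot>\<^sub>v (?L ^\<^sub>m j *\<^sub>v ?y)"
      using mult_mat_vec[OF Lj yc] by simp
    finally have e: "?L ^\<^sub>m j *\<^sub>v Qop n (\<mu> # ls) u = ?L ^\<^sub>m (Suc j) *\<^sub>v ?y - \<mu> \<cdot>\<^sub>v (?L ^\<^sub>m j *\<^sub>v ?y)" .
    have "(?L ^\<^sub>m (Suc j) *\<^sub>v ?y) $ (i - 1) = 0" "(?L ^\<^sub>m j *\<^sub>v ?y) $ (i - 1) = 0"
      using IH j i by auto
    moreover have p: "i - 1 < n" using I i by blast
    moreover have "?L ^\<^sub>m (Suc j) *\<^sub>v ?y \<in> carrier_vec n" "?L ^\<^sub>m j *\<^sub>v ?y \<in> carrier_vec n"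
      using mult_mat_vec_carrier[OF pow_carrier_mat[OF L_carrier] yc] by blast+
    ultimately show "(?L ^\<^sub>m j *\<^sub>v Qop n (\<mu> # ls) u) $ (i - 1) = 0"
      unfolding e using idx_helper by blast
  qed
qed


lemma spectral:
  assumes n: "n > 0" and I: "\<forall>i\<in>I. i - 1 < n"
    and u: "u \<in> carrier_vec n" "u \<noteq> 0\<^sub>v n"
    and Z: "\<forall>j<n. \<forall>i\<in>I. (path_laplacian n ^\<^sub>m j *\<^sub>v u) $ (i - 1) = 0"
  shows "\<exists>x. unreachable_eigenvalue n I x"
proof -
  define c where "c = Wm n *\<^sub>v u"
  have cc: "c \<in> carrier_vec n" by (simp add: c_def mult_mat_vec_carrier[OF Wm_carrier u(1)])
  have uc: "u = Vm n *\<^sub>v c" unfolding c_def by (rule expand[OF u(1)])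
  have "c \<noteq> 0\<^sub>v n"
  proof
    assume "c = 0\<^sub>v n"
    then have "u = Vm n *\<^sub>v 0\<^sub>v n" using uc by simp
    also have "\<dots> = 0\<^sub>v n" by (rule eq_vecI) (auto simp: scalar_prod_def)
    finally have "u = 0\<^sub>v n" .
    then show False using u(2) by simp
  qed
  then obtain k where k: "k < n" "c $ k \<noteq> 0" using cc by (auto simp: vec_eq_iff)
  define ks where "ks = [0..<k] @ [Suc k..<n]"
  have ks_set: "set ks = {l. l < n \<and> l \<noteq> k}" using k by (auto simp: ks_def)
  have ks_len: "length ks = n - 1" using k by (simp add: ks_def)
  define ls where "ls = map (lam n) ks"
  have ls_len: "length ls = n - 1" by (simp add: ls_def ks_len)
  define P where "P l = prod_list (map (\<lambda>\<mu>. lam n l - \<mu>) ls)" for l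
  have P0: "P l = 0" if "l < n" "l \<noteq> k" for l
  proof -
    have "lam n l \<in> set ls" using that ks_set by (auto simp: ls_def)
    then have "0 \<in> set (map (\<lambda>\<mu>. lam n l - \<mu>) ls)" by force
    then show ?thesis by (simp add: P_def prod_list_zero_iff)
  qed
  have Pk: "P k \<noteq> 0"
  proof
    assume "P k = 0"
    then have "0 \<in> set (map (\<lambda>\<mu>. lam n k - \<mu>) ls)" by (simp add: P_def prod_list_zero_iff)
    then obtain l where "l \<in> set ks" "lam n k = lam n l" by (auto simp: ls_def)
    then show False using lam_inj[of k n l] ks_set k by auto
  qed
  define e where "e = c $ k * P k"
  have e: "e \<noteq> 0" using Pk k by (simp add: e_def)
  have coef: "vec n (\<lambda>l. c $ l * P l) = e \<cdot>\<^sub>v unit_vec n k"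
    by (rule eq_vecI) (auto simp: e_def P0 unit_vec_def)
  have Q: "Qop n ls u = e \<cdot>\<^sub>v wv n k"
  proof -
    have "Qop n ls u = Vm n *\<^sub>v vec n (\<lambda>l. c $ l * P l)"
      unfolding uc P_def by (rule Qop_V[OF cc])
    also have "\<dots> = Vm n *\<^sub>v (e \<cdot>\<^sub>v unit_vec n k)" by (simp add: coef)
    also have "\<dots> = e \<cdot>\<^sub>v (Vm n *\<^sub>v unit_vec n k)" using mult_mat_vec[OF Vm_carrier unit_vec_carrier] by simp
    also have "Vm n *\<^sub>v unit_vec n k = wv n k" using mult_unit_col[OF Vm_carrier k(1)] col_Vm[OF k(1)] by simp
    finally show ?thesis .
  qed
  have "\<forall>j < 1. \<forall>i\<in>I. (path_laplacian n ^\<^sub>m j *\<^sub>v Qop n ls u) $ (i - 1) = 0"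
    by (rule Qop_Z[OF u(1) I]) (use Z ls_len n in simp)
  then have "\<forall>i\<in>I. (Qop n ls u) $ (i - 1) = 0"
    using Qop_carrier[OF u(1), of ls] carrier_matD[OF L_carrier[of n]] by simp
  then have "\<forall>i\<in>I. wv n k $ (i - 1) = 0" using Q e I by simp
  then have "unreachable_eigenvalue n I (lam n k)"
    unfolding unreachable_eigenvalue_def using wv_eig[OF k(1)] by blast
  then show ?thesis by blast
qed


lemma L_pow_carrier[simp]: "path_laplacian n ^\<^sub>m k \<in> carrier_mat n n"
  by (rule pow_carrier_mat[OF L_carrier])
lemma L_pow_dim[simp]: "dim_row (path_laplacian n ^\<^sub>m k) = n" "dim_col (path_laplacian n ^\<^sub>m k) = n"
  using carrier_matD[OF L_pow_carrier] by auto
lemma L_dim[simp]: "dim_row (path_laplacian n) = n" "dim_col (path_laplacian n) = n"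
  using carrier_matD[OF L_carrier] by auto

lemma L_pow_comm: "path_laplacian n * path_laplacian n ^\<^sub>m k = path_laplacian n ^\<^sub>m k * path_laplacian n"
proof (induction k)
  case 0 then show ?case by (simp add: carrier_matD[OF L_carrier])
next
  case (Suc k)
  let ?L = "path_laplacian n"
  have "?L * ?L ^\<^sub>m Suc k = ?L * (?L ^\<^sub>m k * ?L)" by simp
  also have "\<dots> = (?L * ?L ^\<^sub>m k) * ?L"
    by (rule assoc_mult_mat[symmetric, of _ n n _ n _ n]) auto
  also have "\<dots> = ?L ^\<^sub>m Suc k * ?L" using Suc by simp
  finally show ?case .
qed

lemma L_pow_sym: "transpose_mat (path_laplacian n ^\<^sub>m k) = path_laplacian n ^\<^sub>m k"
proof (induction k)
  case 0 then show ?case by (simp add: carrier_matD[OF L_carrier])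
next
  case (Suc k)
  let ?L = "path_laplacian n"
  have "transpose_mat (?L ^\<^sub>m Suc k) = transpose_mat (?L ^\<^sub>m k * ?L)" by simp
  also have "\<dots> = transpose_mat ?L * transpose_mat (?L ^\<^sub>m k)"
    by (rule transpose_mult[of _ n n _ n]) auto
  also have "\<dots> = ?L * ?L ^\<^sub>m k" using Suc L_sym by simp
  also have "\<dots> = ?L ^\<^sub>m Suc k" using L_pow_comm by simp
  finally show ?case .
qed

lemma L_pow_entry_sym:
  assumes "i < n" "j < n"
  shows "(path_laplacian n ^\<^sub>m k) $$ (i, j) = (path_laplacian n ^\<^sub>m k) $$ (j, i)"
proof -
  have "(path_laplacian n ^\<^sub>m k) $$ (i, j) = transpose_mat (path_laplacian n ^\<^sub>m k) $$ (i, j)"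
    by (simp add: L_pow_sym)
  also have "\<dots> = (path_laplacian n ^\<^sub>m k) $$ (j, i)" using assms by simp
  finally show ?thesis .
qed


lemma B_carrier[simp]: "input_mat n is \<in> carrier_mat n (length is)" by (simp add: input_mat_def)
lemma B_dim[simp]: "dim_row (input_mat n is) = n" "dim_col (input_mat n is) = length is"
  by (simp_all add: input_mat_def)

lemma col_B: "r < length is \<Longrightarrow> is ! r - 1 < n \<Longrightarrow> col (input_mat n is) r = unit_vec n (is ! r - 1)"
  by (rule eq_vecI) (auto simp: input_mat_def unit_vec_def)

lemma LB_entry:
  assumes "r < length is" "is ! r - 1 < n" "i < n"
  shows "(path_laplacian n ^\<^sub>m k * input_mat n is) $$ (i, r) = (path_laplacian n ^\<^sub>m k) $$ (i, is ! r - 1)"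
  using assms by (simp add: col_B)

lemma BTL_entry:
  assumes "r < length is" "is ! r - 1 < n" "j < n"
  shows "(transpose_mat (input_mat n is) * path_laplacian n ^\<^sub>m k) $$ (r, j) = (path_laplacian n ^\<^sub>m k) $$ (is ! r - 1, j)"
  using assms by (simp add: col_B)


definition Om :: "nat \<Rightarrow> nat list \<Rightarrow> real mat" where
  "Om n is = obsv_mat (path_laplacian n) (transpose_mat (input_mat n is))"

lemma Om_dim[simp]: "dim_row (Om n is) = length is * n" "dim_col (Om n is) = n"
  unfolding Om_def obsv_mat_def dim_row_mat dim_col_mat index_transpose_mat B_dim L_dim by (rule refl)+

lemma obsv_entry:
  assumes "i < dim_row C * dim_col A" "j < dim_col A"
  shows "obsv_mat A C $$ (i,j) = (C * A ^\<^sub>m (i div dim_row C)) $$ (i mod dim_row C, j)"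
  unfolding obsv_mat_def by (subst index_mat(1)[OF assms]) (simp only: case_prod_conv)

lemma ctrb_entry:
  assumes "i < dim_row A" "j < dim_row A * dim_col B"
  shows "ctrb_mat A B $$ (i,j) = (A ^\<^sub>m (j div dim_col B) * B) $$ (i, j mod dim_col B)"
  unfolding ctrb_mat_def by (subst index_mat(1)[OF assms]) (simp only: case_prod_conv)

lemma ctrb_dim: "dim_row (ctrb_mat A B) = dim_row A" "dim_col (ctrb_mat A B) = dim_row A * dim_col B"
  unfolding ctrb_mat_def dim_row_mat dim_col_mat by (rule refl)+

lemma Om_carrier: "Om n is \<in> carrier_mat (length is * n) n" unfolding carrier_mat_def using Om_dim by blast

lemma Om_entry:
  assumes P: "\<forall>r<length is. is ! r - 1 < n" and i: "i < length is * n" and j: "j < n"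
  shows "Om n is $$ (i, j) = (path_laplacian n ^\<^sub>m (i div length is)) $$ (is ! (i mod length is) - 1, j)"
proof -
  have m: "length is > 0" using i by (cases "length is") auto
  have r: "i mod length is < length is" using m by simp
  have "Om n is $$ (i, j) = (transpose_mat (input_mat n is) * path_laplacian n ^\<^sub>m (i div length is)) $$ (i mod length is, j)"
    unfolding Om_def using obsv_entry[of i "transpose_mat (input_mat n is)" "path_laplacian n" j] i j by simp
  also have "\<dots> = (path_laplacian n ^\<^sub>m (i div length is)) $$ (is ! (i mod length is) - 1, j)"
    by (rule BTL_entry) (use r P j in auto)
  finally show ?thesis .
qed

lemma ctrb_Om:
  assumes P: "\<forall>r<length is. is ! r - 1 < n"
  shows "ctrb_mat (path_laplacian n) (input_mat n is) = transpose_mat (Om n is)"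
proof (rule eq_matI)
  fix i c assume ic: "i < dim_row (transpose_mat (Om n is))" "c < dim_col (transpose_mat (Om n is))"
  then have i: "i < n" and c: "c < length is * n" by auto
  have m: "length is > 0" using c by (cases "length is") auto
  have r: "c mod length is < length is" using m by simp
  have c': "c < n * length is" using c by (simp add: mult.commute)
  have "ctrb_mat (path_laplacian n) (input_mat n is) $$ (i, c)
      = (path_laplacian n ^\<^sub>m (c div length is) * input_mat n is) $$ (i, c mod length is)"
    using ctrb_entry[of i "path_laplacian n" c "input_mat n is"] i c' by simp
  also have "\<dots> = (path_laplacian n ^\<^sub>m (c div length is)) $$ (i, is ! (c mod length is) - 1)"
    by (rule LB_entry) (use r P i in auto)
  also have "\<dots> = (path_laplacian n ^\<^sub>m (c div length is)) $$ (is ! (c mod length is) - 1, i)"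
    by (rule L_pow_entry_sym) (use r P i in auto)
  also have "\<dots> = Om n is $$ (c, i)" using Om_entry[OF P c i] by simp
  also have "\<dots> = transpose_mat (Om n is) $$ (i, c)" using i c by simp
  finally show "ctrb_mat (path_laplacian n) (input_mat n is) $$ (i, c) = transpose_mat (Om n is) $$ (i, c)" .
qed (auto simp: ctrb_dim mult.commute)

lemma Om_mult:
  assumes P: "\<forall>r<length is. is ! r - 1 < n" and i: "i < length is * n" and u: "u \<in> carrier_vec n"
  shows "(Om n is *\<^sub>v u) $ i = (path_laplacian n ^\<^sub>m (i div length is) *\<^sub>v u) $ (is ! (i mod length is) - 1)"
proof -
  have m: "length is > 0" using i by (cases "length is") auto
  have p: "is ! (i mod length is) - 1 < n" using P m by simp
  have "row (Om n is) i = row (path_laplacian n ^\<^sub>m (i div length is)) (is ! (i mod length is) - 1)"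
  proof (rule eq_vecI)
    show "dim_vec (row (Om n is) i) = dim_vec (row (path_laplacian n ^\<^sub>m (i div length is)) (is ! (i mod length is) - 1))"
      by (simp only: index_row(2) Om_dim L_pow_dim)
    fix ia assume "ia < dim_vec (row (path_laplacian n ^\<^sub>m (i div length is)) (is ! (i mod length is) - 1))"
    then have ia: "ia < n" by (simp only: index_row(2) L_pow_dim)
    have "row (Om n is) i $ ia = Om n is $$ (i, ia)" using i ia by simp
    also have "\<dots> = (path_laplacian n ^\<^sub>m (i div length is)) $$ (is ! (i mod length is) - 1, ia)"
      using Om_entry[OF P i ia] .
    also have "\<dots> = row (path_laplacian n ^\<^sub>m (i div length is)) (is ! (i mod length is) - 1) $ ia"
      using p ia by simp
    finally show "row (Om n is) i $ ia = row (path_laplacian n ^\<^sub>m (i div length is)) (is ! (i mod length is) - 1) $ ia" .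
  qed
  then show ?thesis using i p u by simp
qed

definition Zc :: "nat \<Rightarrow> nat list \<Rightarrow> real vec \<Rightarrow> bool" where
  "Zc n is u \<longleftrightarrow> (\<forall>j<n. \<forall>i\<in>set is. (path_laplacian n ^\<^sub>m j *\<^sub>v u) $ (i - 1) = 0)"

lemma Om_ker:
  assumes P: "\<forall>r<length is. is ! r - 1 < n" and u: "u \<in> carrier_vec n"
  shows "Om n is *\<^sub>v u = 0\<^sub>v (length is * n) \<longleftrightarrow> Zc n is u"
proof
  assume z: "Om n is *\<^sub>v u = 0\<^sub>v (length is * n)"
  show "Zc n is u" unfolding Zc_def
  proof (intro allI impI ballI)
    fix j i assume j: "j < n" and i: "i \<in> set is"
    obtain r where r: "r < length is" "i = is ! r" using i by (auto simp: in_set_conv_nth)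
    define c where "c = j * length is + r"
    have "c < j * length is + length is" using r by (simp add: c_def)
    also have "\<dots> = (Suc j) * length is" by simp
    also have "\<dots> \<le> n * length is" using j by (intro mult_le_mono1) simp
    finally have c: "c < length is * n" by (simp add: mult.commute)
    have cc: "c = r + j * length is" by (simp add: c_def)
    have m0: "length is \<noteq> 0" using r by linarith
    have cd: "c div length is = j" "c mod length is = r" unfolding cc using r m0 by simp_all
    have "(Om n is *\<^sub>v u) $ c = 0" using z c by simp
    then show "(path_laplacian n ^\<^sub>m j *\<^sub>v u) $ (i - 1) = 0"
      using Om_mult[OF P c u] cd r by simp
  qed
next
  assume Z: "Zc n is u"
  show "Om n is *\<^sub>v u = 0\<^sub>v (length is * n)"
  proof (rule eq_vecI)
    fix c assume "c < dim_vec (0\<^sub>v (length is * n) :: real vec)"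
    then have c: "c < length is * n" by simp
    have m: "length is > 0" using c by (cases "length is") auto
    have "c div length is < n" using c m by (simp add: div_less_iff_less_mult mult.commute)
    moreover have "is ! (c mod length is) \<in> set is" using m by simp
    ultimately have "(path_laplacian n ^\<^sub>m (c div length is) *\<^sub>v u) $ (is ! (c mod length is) - 1) = 0"
      using Z unfolding Zc_def by blast
    then show "(Om n is *\<^sub>v u) $ c = 0\<^sub>v (length is * n) $ c" using Om_mult[OF P c u] c by simp
  qed simp
qed


lemma real_selfdot: "(u::real vec) \<in> carrier_vec n \<Longrightarrow> u \<bullet> u = 0 \<Longrightarrow> u = 0\<^sub>v n"
proof -
  assume u: "u \<in> carrier_vec n" and z: "u \<bullet> u = 0"
  have "(\<Sum>i\<in>{0..<n}. u $ i * u $ i) = 0" using z u by (simp add: scalar_prod_def)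
  then have "\<forall>i\<in>{0..<n}. u $ i * u $ i = 0" by (subst (asm) sum_nonneg_eq_0_iff) auto
  then show "u = 0\<^sub>v n" using u by (auto simp: vec_eq_iff)
qed

lemma eig_pow:
  assumes "eigenvector A v x" "(A :: real mat) \<in> carrier_mat n n"
  shows "A ^\<^sub>m j *\<^sub>v v = x ^ j \<cdot>\<^sub>v v"
proof (induction j)
  case 0
  have "v \<in> carrier_vec n" using assms unfolding eigenvector_def by auto
  then show ?case using assms(2) by auto
next
  case (Suc j)
  have v: "v \<in> carrier_vec n" and Av: "A *\<^sub>v v = x \<cdot>\<^sub>v v" using assms unfolding eigenvector_def by auto
  have "A ^\<^sub>m Suc j *\<^sub>v v = A ^\<^sub>m j *\<^sub>v (A *\<^sub>v v)"
    using assoc_mult_mat_vec[OF pow_carrier_mat[OF assms(2)] assms(2) v] by simp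
  also have "\<dots> = x \<cdot>\<^sub>v (A ^\<^sub>m j *\<^sub>v v)" unfolding Av using mult_mat_vec[OF pow_carrier_mat[OF assms(2)] v] by simp
  also have "\<dots> = x ^ Suc j \<cdot>\<^sub>v v" unfolding Suc by (simp add: smult_smult_assoc)
  finally show ?case .
qed

theorem mainTheorem7:
  fixes n :: nat and "is" :: "nat list"
  assumes "is \<noteq> []" and "sorted_wrt (<) is" and "set is \<subseteq> {1..n}"
  shows "(reachable (path_laplacian n) (input_mat n is) \<longleftrightarrow>
            \<not> (\<exists>x. common_eigenvalue n is x))
       \<and> (observable (path_laplacian n) (transpose_mat (input_mat n is)) \<longleftrightarrow>
            \<not> (\<exists>x. common_eigenvalue n is x))
       \<and> {x. common_eigenvalue n is x} = {x. unreachable_eigenvalue n (set is) x}"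
proof -
  have inr: "is ! r \<in> {1..n}" if "r < length is" for r
  proof -
    have "is ! r \<in> set is" using that by simp
    then show ?thesis using assms(3) by blast
  qed
  have P: "\<forall>r<length is. is ! r - 1 < n" using inr by fastforce
  have n: "n > 0" using inr[of 0] assms(1) by fastforce
  have I: "\<forall>i\<in>set is. i - 1 < n" using assms(3) by fastforce
  have C: "common_eigenvalue n is x \<longleftrightarrow> unreachable_eigenvalue n (set is) x" for x
    using common_iff[OF assms] unreach_iff[OF assms(3)] by simp
  have K: "(\<forall>u\<in>carrier_vec n. Om n is *\<^sub>v u = 0\<^sub>v (length is * n) \<longrightarrow> u = 0\<^sub>v n)
      \<longleftrightarrow> (\<forall>u\<in>carrier_vec n. Zc n is u \<longrightarrow> u = 0\<^sub>v n)"
    using Om_ker[OF P] by blast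
  have S: "(\<exists>u\<in>carrier_vec n. u \<noteq> 0\<^sub>v n \<and> Zc n is u) \<longleftrightarrow> (\<exists>x. unreachable_eigenvalue n (set is) x)"
  proof
    assume "\<exists>u\<in>carrier_vec n. u \<noteq> 0\<^sub>v n \<and> Zc n is u"
    then obtain u where u: "u \<in> carrier_vec n" "u \<noteq> 0\<^sub>v n" "Zc n is u" by blast
    show "\<exists>x. unreachable_eigenvalue n (set is) x"
      by (rule spectral[OF n I u(1,2)]) (use u(3) in \<open>simp add: Zc_def\<close>)
  next
    assume "\<exists>x. unreachable_eigenvalue n (set is) x"
    then obtain x v where v: "eigenvector (path_laplacian n) v x" "\<forall>j\<in>set is. v $ (j - 1) = 0"
      unfolding unreachable_eigenvalue_def by blast
    have vc: "v \<in> carrier_vec n" "v \<noteq> 0\<^sub>v n" using v(1) unfolding eigenvector_def by auto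
    have "Zc n is v" unfolding Zc_def
    proof (intro allI impI ballI)
      fix j i assume "j < n" "i \<in> set is"
      then show "(path_laplacian n ^\<^sub>m j *\<^sub>v v) $ (i - 1) = 0"
        using eig_pow[OF v(1) L_carrier, of j] v(2) I vc(1) by simp
    qed
    then show "\<exists>u\<in>carrier_vec n. u \<noteq> 0\<^sub>v n \<and> Zc n is u" using vc by blast
  qed
  have R: "reachable (path_laplacian n) (input_mat n is) \<longleftrightarrow> (\<forall>u\<in>carrier_vec n. Zc n is u \<longrightarrow> u = 0\<^sub>v n)"
  proof -
    have "reachable (path_laplacian n) (input_mat n is) \<longleftrightarrow> vec_space.rank n (transpose_mat (Om n is)) = n"
      unfolding reachable_def ctrb_Om[OF P] by simp
    also have "\<dots> \<longleftrightarrow> (\<forall>u\<in>carrier_vec n. Om n is *\<^sub>v u = 0\<^sub>v (length is * n) \<longrightarrow> u = 0\<^sub>v n)"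
      by (rule vec_space.KER1[OF Om_carrier real_selfdot])
    finally show ?thesis using K by simp
  qed
  have O: "observable (path_laplacian n) (transpose_mat (input_mat n is)) \<longleftrightarrow> (\<forall>u\<in>carrier_vec n. Zc n is u \<longrightarrow> u = 0\<^sub>v n)"
  proof -
    have "observable (path_laplacian n) (transpose_mat (input_mat n is)) \<longleftrightarrow> vec_space.rank (length is * n) (Om n is) = n"
      unfolding observable_def Om_def[symmetric] by simp
    also have "\<dots> \<longleftrightarrow> (\<forall>u\<in>carrier_vec n. Om n is *\<^sub>v u = 0\<^sub>v (length is * n) \<longrightarrow> u = 0\<^sub>v n)"
      by (rule vec_space.KER2[OF Om_carrier])
    finally show ?thesis using K by simp
  qed
  have N: "(\<forall>u\<in>carrier_vec n. Zc n is u \<longrightarrow> u = 0\<^sub>v n) \<longleftrightarrow> \<not> (\<exists>x. common_eigenvalue n is x)"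
    using S C by blast
  show ?thesis using R O N C by blast
qed


end
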